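(* Let $G$ be a DAG, let $V^\infty\subseteq V(G)$, and let $T\subseteq V^\infty$. Let $M,Z\subseteq V(G)$ with $Z\cap T=\emptyset$. Suppose $M$ intersects every odd $T$-path in $G$ and $s_G(M)\subseteq Z\subseteq V(G)\setminus M$. Let $(G',V'^\infty):=\mathrm{torso}(G,V^\infty,Z)$. Then every node of $s_{G'}(M)$ has total degree at most one in $G'\setminus M$. Here shadows in $G'$ are taken with respect to the same terminal set $T$.
   Context: Paths are simple directed paths; a path is odd if it has an odd number of edges; a $T$-path has both ends in $T$. $\mathcal{R}_H(X)$ is the set of nodes reachable from $X$ in $H$, including $X$. For a graph $H\supseteq T$ and $M\subseteq V(H)$, the shadows are: - $f_H(M):=V(H\setminus M)\setminus\mathcal{R}_{H\setminus M}(T)$; - $r_H(M)$ is the set of nodes $v\in V(H)\setminus M$ with no path to $T$ in $H\setminus M$; - $s_H(M):=f_H(M)\cup r_H(M)$. Parity-preserving torso. Given a DAG $G$ and $Z,V^\infty\subseteq V(G)$, first form $G_0$ from $G\setminus Z$ by adding an edge $u\rightarrow v$ for every pair of distinct $u,v\in V(G)\setminus Z$ such that $G$ has an odd $u\rightarrow v$ path with all internal nodes in $Z$. Then, for every pair of distinct $u,v\in V(G)\setminus Z$ such that $G$ has an even $u\rightarrow v$ path with all internal nodes in $Z$, add a new node $x_{uv}$ and edges $u\rightarrow x_{uv}$, $x_{uv}\rightarrow v$. The result is $G'$. Set $V'^\infty:=(V^\infty\setminus Z)\cup\{\text{new nodes}\}$, and $\mathrm{torso}(G,V^\infty,Z):=(G',V'^\infty)$.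 *)

theory Defs
  imports Main
begin

type_synonym 'a digraph = "'a set \<times> ('a \<times> 'a) set"

definition is_dag :: "'a digraph \<Rightarrow> bool" where
  "is_dag H \<longleftrightarrow> finite (fst H) \<and> snd H \<subseteq> fst H \<times> fst H \<and> acyclic (snd H)"

definition dpath :: "'a digraph \<Rightarrow> 'a list \<Rightarrow> bool" where
  "dpath H xs \<longleftrightarrow> xs \<noteq> [] \<and> distinct xs \<and> set xs \<subseteq> fst H \<and>
     (\<forall>i. Suc i < length xs \<longrightarrow> (xs ! i, xs ! Suc i) \<in> snd H)"

definition path_len :: "'a list \<Rightarrow> nat" where
  "path_len xs = length xs - 1"

definition internal :: "'a list \<Rightarrow> 'a set" where
  "internal xs = set (butlast (tl xs))"

definition del_nodes :: "'a digraph \<Rightarrow> 'a set \<Rightarrow> 'a digraph" where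
  "del_nodes H M = (fst H - M, {e \<in> snd H. fst e \<notin> M \<and> snd e \<notin> M})"

definition reach :: "'a digraph \<Rightarrow> 'a set \<Rightarrow> 'a set" where
  "reach H X = {v. \<exists>xs. dpath H xs \<and> hd xs \<in> X \<and> last xs = v}"

definition f_shadow :: "'a digraph \<Rightarrow> 'a set \<Rightarrow> 'a set \<Rightarrow> 'a set" where
  "f_shadow H T M = fst (del_nodes H M) - reach (del_nodes H M) T"

definition r_shadow :: "'a digraph \<Rightarrow> 'a set \<Rightarrow> 'a set \<Rightarrow> 'a set" where
  "r_shadow H T M = {v \<in> fst H - M. \<not> (\<exists>xs. dpath (del_nodes H M) xs \<and> hd xs = v \<and> last xs \<in> T)}"

definition shadow :: "'a digraph \<Rightarrow> 'a set \<Rightarrow> 'a set \<Rightarrow> 'a set" where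
  "shadow H T M = f_shadow H T M \<union> r_shadow H T M"

definition Zpath :: "'a digraph \<Rightarrow> 'a set \<Rightarrow> 'a \<Rightarrow> 'a \<Rightarrow> 'a list \<Rightarrow> bool" where
  "Zpath G Z u v xs \<longleftrightarrow> dpath G xs \<and> hd xs = u \<and> last xs = v \<and> internal xs \<subseteq> Z"

text \<open>Parity-preserving torso. Old nodes are Inl v; the new node x_uv is Inr (u,v).\<close>
definition torso_graph :: "'a digraph \<Rightarrow> 'a set \<Rightarrow> ('a + 'a \<times> 'a) digraph" where
  "torso_graph G Z =
    (let W = fst G - Z;
         odd_pairs = {(u, v). u \<in> W \<and> v \<in> W \<and> u \<noteq> v \<and> (\<exists>xs. Zpath G Z u v xs \<and> odd (path_len xs))};
         even_pairs = {(u, v). u \<in> W \<and> v \<in> W \<and> u \<noteq> v \<and> (\<exists>xs. Zpath G Z u v xs \<and> even (path_len xs))}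
     in (Inl ` W \<union> Inr ` even_pairs,
         (\<lambda>(u, v). (Inl u, Inl v)) ` (snd (del_nodes G Z) \<union> odd_pairs)
         \<union> (\<lambda>(u, v). (Inl u, Inr (u, v))) ` even_pairs
         \<union> (\<lambda>(u, v). (Inr (u, v), Inl v)) ` even_pairs))"

definition torso_inf :: "'a digraph \<Rightarrow> 'a set \<Rightarrow> 'a set \<Rightarrow> ('a + 'a \<times> 'a) set" where
  "torso_inf G Vinf Z = Inl ` (Vinf - Z) \<union> (fst (torso_graph G Z) - Inl ` UNIV)"

definition torso :: "'a digraph \<Rightarrow> 'a set \<Rightarrow> 'a set \<Rightarrow> ('a + 'a \<times> 'a) digraph \<times> ('a + 'a \<times> 'a) set" where
  "torso G Vinf Z = (torso_graph G Z, torso_inf G Vinf Z)"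

definition total_degree :: "'a digraph \<Rightarrow> 'a \<Rightarrow> nat" where
  "total_degree H w = card {u. (u, w) \<in> snd H} + card {u. (w, u) \<in> snd H}"

end

theory Submission
  imports Defs
begin

lemma del_edge: "(a,b) \<in> snd (del_nodes H X) \<longleftrightarrow> (a,b) \<in> snd H \<and> a \<notin> X \<and> b \<notin> X"
  by (auto simp: del_nodes_def)

lemma del_node: "fst (del_nodes H X) = fst H - X"
  by (simp add: del_nodes_def)

lemma rtrancl_dpath:
  assumes "(a,b) \<in> (snd H)\<^sup>*" "a \<in> fst H" "snd H \<subseteq> fst H \<times> fst H"
  shows "\<exists>xs. dpath H xs \<and> hd xs = a \<and> last xs = b"
  using assms(1)
proof (induction rule: rtrancl_induct)
  case base
  then show ?case using assms(2) by (auto simp: dpath_def intro!: exI[of _ "[a]"])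
next
  case (step b c)
  then obtain xs where xs: "dpath H xs" "hd xs = a" "last xs = b" by blast
  have cH: "c \<in> fst H" using step(2) assms(3) by auto
  show ?case
  proof (cases "c \<in> set xs")
    case True
    then obtain i where i: "i < length xs" "xs ! i = c" by (auto simp: in_set_conv_nth)
    let ?ys = "take (Suc i) xs"
    have "dpath H ?ys" using xs(1) i
      apply (simp add: dpath_def)
      using set_take_subset by (metis order_trans)
    moreover have "hd ?ys = a" using xs i by (cases xs) auto
    moreover have "last ?ys = c" using i by (simp add: take_Suc_conv_app_nth)
    ultimately show ?thesis by blast
  next
    case False
    let ?ys = "xs @ [c]"
    have ne: "xs \<noteq> []" using xs(1) by (simp add: dpath_def)
    have "dpath H ?ys" unfolding dpath_def
    proof (intro conjI allI impI)
      show "distinct ?ys" using False xs(1) by (simp add: dpath_def)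
      show "set ?ys \<subseteq> fst H" using cH xs(1) by (simp add: dpath_def)
      fix j assume j: "Suc j < length ?ys"
      show "(?ys ! j, ?ys ! Suc j) \<in> snd H"
      proof (cases "Suc j < length xs")
        case True then show ?thesis using xs(1) by (simp add: dpath_def nth_append)
      next
        case False
        then have "j = length xs - 1" using j by simp
        then show ?thesis using False ne xs(3) step(2)
          by (simp add: nth_append last_conv_nth)
      qed
    qed simp
    moreover have "hd ?ys = a" using xs ne by simp
    moreover have "last ?ys = c" by simp
    ultimately show ?thesis by blast
  qed
qed

lemma torso_nodes_Inl: "Inl x \<in> fst (torso_graph G Z) \<longleftrightarrow> x \<in> fst G - Z"
  unfolding torso_graph_def Let_def by auto

lemma torso_node_Inr: "Inr p \<in> fst (torso_graph G Z) \<Longrightarrow>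
   fst p \<in> fst G - Z \<and> snd p \<in> fst G - Z \<and> fst p \<noteq> snd p \<and>
   (\<exists>xs. Zpath G Z (fst p) (snd p) xs \<and> even (path_len xs))"
  unfolding torso_graph_def Let_def by auto

lemma torso_in: "(a, Inr p) \<in> snd (torso_graph G Z) \<Longrightarrow> a = Inl (fst p)"
  unfolding torso_graph_def Let_def by auto

lemma torso_out: "(Inr p, a) \<in> snd (torso_graph G Z) \<Longrightarrow> a = Inl (snd p)"
  unfolding torso_graph_def Let_def by auto

lemma torso_odd: "u \<in> fst G - Z \<Longrightarrow> v \<in> fst G - Z \<Longrightarrow> u \<noteq> v \<Longrightarrow> Zpath G Z u v xs \<Longrightarrow>
   odd (path_len xs) \<Longrightarrow> (Inl u, Inl v) \<in> snd (torso_graph G Z)"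
  unfolding torso_graph_def Let_def by (auto intro!: image_eqI[where x="(u,v)"])

lemma torso_even: "u \<in> fst G - Z \<Longrightarrow> v \<in> fst G - Z \<Longrightarrow> u \<noteq> v \<Longrightarrow> Zpath G Z u v xs \<Longrightarrow>
   even (path_len xs) \<Longrightarrow> (Inl u, Inr (u,v)) \<in> snd (torso_graph G Z) \<and> (Inr (u,v), Inl v) \<in> snd (torso_graph G Z)"
  unfolding torso_graph_def Let_def by (auto intro!: image_eqI[where x="(u,v)"])

lemma torso_wf:
  assumes "snd G \<subseteq> fst G \<times> fst G"
  shows "snd (torso_graph G Z) \<subseteq> fst (torso_graph G Z) \<times> fst (torso_graph G Z)"
  using assms unfolding torso_graph_def Let_def del_nodes_def by auto


lemma proj:
  assumes "dpath (del_nodes G M) p" "hd p \<in> fst G - Z" "last p \<in> fst G - Z"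
  shows "(Inl (hd p), Inl (last p)) \<in> (snd (del_nodes (torso_graph G Z) (Inl ` M)))\<^sup>*"
  using assms
proof (induction "length p" arbitrary: p rule: less_induct)
  case less
  note p = less.prems
  have ne: "p \<noteq> []" and dp: "distinct p" and sp: "set p \<subseteq> fst G - M"
    and ep: "\<And>i. Suc i < length p \<Longrightarrow> (p!i, p!Suc i) \<in> snd G \<and> p!i \<notin> M \<and> p!Suc i \<notin> M"
    using p(1) by (auto simp: dpath_def del_node del_edge)
  show ?case
  proof (cases "length p = 1")
    case True
    then obtain x where "p = [x]" by (cases p) auto
    then show ?thesis by simp
  next
    case False
    then have len: "length p \<ge> 2" using ne by (cases p) (auto simp: Suc_le_eq)
    have ex: "\<exists>k. 0 < k \<and> k < length p \<and> p!k \<notin> Z"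
      using len p(3) ne by (intro exI[of _ "length p - 1"]) (auto simp: last_conv_nth)
    define k where "k = (LEAST k. 0 < k \<and> k < length p \<and> p!k \<notin> Z)"
    have k: "0 < k" "k < length p" "p!k \<notin> Z"
      using LeastI_ex[OF ex] unfolding k_def by auto
    have below: "p!i \<in> Z" if "0 < i" "i < k" for i
      using not_less_Least[of i "\<lambda>k. 0 < k \<and> k < length p \<and> p!k \<notin> Z"] that k
      unfolding k_def by auto
    have "p!k \<in> set p" using k by simp
    then have pkG: "p!k \<in> fst G - Z" "p!k \<notin> M" using sp k by blast+
    have hd0: "hd p = p!0" using ne by (simp add: hd_conv_nth)
    let ?q = "take (Suc k) p"
    have dq: "dpath G ?q" unfolding dpath_def
    proof (intro conjI allI impI)
      show "?q \<noteq> []" using ne by simp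
      show "distinct ?q" using dp by simp
      show "set ?q \<subseteq> fst G" using sp set_take_subset[of "Suc k" p] by blast
      fix i assume "Suc i < length ?q"
      then show "(?q!i, ?q!Suc i) \<in> snd G" using ep[of i] by simp
    qed
    have hq: "hd ?q = hd p" using ne by (cases p) auto
    have lq: "last ?q = p!k" using k by (simp add: take_Suc_conv_app_nth)
    have iq: "internal ?q \<subseteq> Z"
    proof
      fix x assume "x \<in> internal ?q"
      then obtain j where j: "j < length (butlast (tl ?q))" "x = butlast (tl ?q) ! j"
        unfolding internal_def by (auto simp: in_set_conv_nth)
      have "j + 1 < k" using j(1) k by simp
      moreover have "x = p ! Suc j" using j k by (simp add: nth_butlast nth_tl)
      ultimately show "x \<in> Z" using below[of "Suc j"] by simp
    qed
    have neq: "hd p \<noteq> p!k" using hd0 k nth_eq_iff_index_eq[OF dp, of 0 k] ne by auto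
    have Zq: "Zpath G Z (hd p) (p!k) ?q" using dq hq lq iq by (simp add: Zpath_def)
    have hM: "hd p \<notin> M" using sp ne hd_in_set[OF ne] by blast
    have step1: "(Inl (hd p), Inl (p!k)) \<in> (snd (del_nodes (torso_graph G Z) (Inl ` M)))\<^sup>*"
    proof (cases "odd (path_len ?q)")
      case True
      from torso_odd[OF p(2) pkG(1) neq Zq True] hM pkG(2)
      show ?thesis by (auto simp: del_edge)
    next
      case False
      from torso_even[OF p(2) pkG(1) neq Zq] False hM pkG(2)
      have "(Inl (hd p), Inr (hd p, p!k)) \<in> snd (del_nodes (torso_graph G Z) (Inl ` M))"
        "(Inr (hd p, p!k), Inl (p!k)) \<in> snd (del_nodes (torso_graph G Z) (Inl ` M))"
        by (auto simp: del_edge)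
      then show ?thesis by (meson converse_rtrancl_into_rtrancl r_into_rtrancl)
    qed
    let ?r = "drop k p"
    have dr: "dpath (del_nodes G M) ?r" using p(1) k unfolding dpath_def
      using set_drop_subset[of k p] by auto
    have "(Inl (hd ?r), Inl (last ?r)) \<in> (snd (del_nodes (torso_graph G Z) (Inl ` M)))\<^sup>*"
      using less.hyps[of ?r] k dr pkG p(3) by (simp add: hd_drop_conv_nth)
    then have "(Inl (p!k), Inl (last p)) \<in> (snd (del_nodes (torso_graph G Z) (Inl ` M)))\<^sup>*"
      using k by (simp add: hd_drop_conv_nth)
    with step1 show ?thesis by simp
  qed
qed


theorem lemma2p5:
  fixes G :: "'a digraph" and Vinf T M Z :: "'a set"
    and G' :: "('a + 'a \<times> 'a) digraph" and Vinf' :: "('a + 'a \<times> 'a) set"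
  assumes "is_dag G"
    and "Vinf \<subseteq> fst G" and "T \<subseteq> Vinf"
    and "M \<subseteq> fst G" and "Z \<subseteq> fst G" and "Z \<inter> T = {}"
    and "\<forall>xs. dpath G xs \<and> hd xs \<in> T \<and> last xs \<in> T \<and> odd (path_len xs) \<longrightarrow> set xs \<inter> M \<noteq> {}"
    and "shadow G T M \<subseteq> Z" and "Z \<subseteq> fst G - M"
    and "(G', Vinf') = torso G Vinf Z"
  shows "\<forall>w \<in> shadow G' (Inl ` T) (Inl ` M). total_degree (del_nodes G' (Inl ` M)) w \<le> 1"
proof
  have G': "G' = torso_graph G Z" using assms(10) by (simp add: torso_def)
  define H where "H = del_nodes G' (Inl ` M)"
  have wfG: "snd G \<subseteq> fst G \<times> fst G" using assms(1) by (simp add: is_dag_def)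
  have wfH: "snd H \<subseteq> fst H \<times> fst H"
    using torso_wf[OF wfG, of Z] unfolding H_def G' del_nodes_def by auto
  have TW: "T \<subseteq> fst G - Z" using assms(2,3,6) by blast
  have K1: "\<exists>t\<in>T. (Inl t, Inl x) \<in> (snd H)\<^sup>*" if x: "x \<in> fst G - Z" "x \<notin> M" for x
  proof -
    have "x \<notin> f_shadow G T M" using x assms(8) by (auto simp: shadow_def)
    then have "x \<in> reach (del_nodes G M) T" using x by (auto simp: f_shadow_def del_node)
    then obtain p where p: "dpath (del_nodes G M) p" "hd p \<in> T" "last p = x"
      by (auto simp: reach_def)
    from proj[OF p(1)] p TW x show ?thesis unfolding H_def G' by blast
  qed
  have K2: "\<exists>t\<in>T. (Inl x, Inl t) \<in> (snd H)\<^sup>*" if x: "x \<in> fst G - Z" "x \<notin> M" for x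
  proof -
    have "x \<notin> r_shadow G T M" using x assms(8) by (auto simp: shadow_def)
    then obtain p where p: "dpath (del_nodes G M) p" "hd p = x" "last p \<in> T"
      using x by (auto simp: r_shadow_def)
    from proj[OF p(1)] p TW x show ?thesis unfolding H_def G' by blast
  qed
  have TH: "Inl t \<in> fst H" if "t \<in> T" "(Inl t, y) \<in> (snd H)\<^sup>+" for t y
    using that wfH by (auto dest: tranclD)
  have notshadow: False if w: "w \<in> fst H" and r1: "\<exists>t\<in>T. (Inl t, w) \<in> (snd H)\<^sup>*"
    and r2: "\<exists>t\<in>T. (w, Inl t) \<in> (snd H)\<^sup>*" and ws: "w \<in> shadow G' (Inl ` T) (Inl ` M)" for w
  proof -
    obtain t where t: "t \<in> T" "(Inl t, w) \<in> (snd H)\<^sup>*" using r1 by blast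
    have "Inl t \<in> fst H"
    proof (cases "Inl t = w")
      case True then show ?thesis using w by simp
    next
      case False then show ?thesis using t TH rtrancl_eq_or_trancl by metis
    qed
    from rtrancl_dpath[OF t(2) this wfH] t
    have "w \<in> reach H (Inl ` T)" by (auto simp: reach_def)
    moreover obtain t' where t': "t' \<in> T" "(w, Inl t') \<in> (snd H)\<^sup>*" using r2 by blast
    from rtrancl_dpath[OF t'(2) w wfH] t'
    have "\<exists>xs. dpath H xs \<and> hd xs = w \<and> last xs \<in> Inl ` T" by auto
    ultimately show False using ws w unfolding shadow_def f_shadow_def r_shadow_def H_def
      by (auto simp: del_node)
  qed
  fix w assume ws: "w \<in> shadow G' (Inl ` T) (Inl ` M)"
  then have wH: "w \<in> fst H" unfolding shadow_def f_shadow_def r_shadow_def H_def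
    by (auto simp: del_node)
  show "total_degree (del_nodes G' (Inl ` M)) w \<le> 1"
  proof (cases w)
    case (Inl x)
    then have x: "x \<in> fst G - Z" "x \<notin> M" using wH torso_nodes_Inl[of x G Z]
      unfolding H_def G' by (auto simp: del_node)
    from notshadow[OF wH _ _ ws] K1[OF x] K2[OF x] Inl show ?thesis by simp
  next
    case (Inr pr)
    obtain u v where pr: "pr = (u,v)" by (cases pr)
    have uv: "u \<in> fst G - Z" "v \<in> fst G - Z" "u \<noteq> v"
      and ex: "\<exists>xs. Zpath G Z u v xs \<and> even (path_len xs)"
      using torso_node_Inr[of pr G Z] wH unfolding H_def G' Inr pr by (auto simp: del_node)
    have inS: "{a. (a, w) \<in> snd H} \<subseteq> (if u \<in> M then {} else {Inl u})"
      using torso_in[of _ pr G Z] unfolding H_def G' Inr pr by (auto simp: del_edge)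
    have outS: "{a. (w, a) \<in> snd H} \<subseteq> (if v \<in> M then {} else {Inl v})"
      using torso_out[of pr _ G Z] unfolding H_def G' Inr pr by (auto simp: del_edge)
    show ?thesis
    proof (cases "u \<in> M \<or> v \<in> M")
      case True
      have fin: "finite {a. (a, w) \<in> snd H}" "finite {a. (w, a) \<in> snd H}"
        using inS outS finite_subset[of _ "{Inl u}"] finite_subset[of _ "{Inl v}"]
        by (auto split: if_splits)
      have c1: "card {a. (a, w) \<in> snd H} \<le> 1"
        using card_mono[of "{Inl u}" "{a. (a, w) \<in> snd H}"] inS by (auto split: if_splits)
      have c2: "card {a. (w, a) \<in> snd H} \<le> 1"
        using card_mono[of "{Inl v}" "{a. (w, a) \<in> snd H}"] outS by (auto split: if_splits)
      have "card {a. (a, w) \<in> snd H} = 0 \<or> card {a. (w, a) \<in> snd H} = 0"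
        using True inS outS fin by auto
      with c1 c2 show ?thesis unfolding total_degree_def H_def[symmetric] by auto
    next
      case False
      obtain xs where xs: "Zpath G Z u v xs" "even (path_len xs)" using ex by blast
      from torso_even[OF uv xs] False
      have e1: "(Inl u, w) \<in> snd H" and e2: "(w, Inl v) \<in> snd H"
        unfolding H_def G' Inr pr by (auto simp: del_edge)
      obtain t where t: "t \<in> T" "(Inl t, Inl u) \<in> (snd H)\<^sup>*" using K1[of u] uv False by blast
      obtain t' where t': "t' \<in> T" "(Inl v, Inl t') \<in> (snd H)\<^sup>*" using K2[of v] uv False by blast
      have "(Inl t, w) \<in> (snd H)\<^sup>*" using t(2) e1 by simp
      moreover have "(w, Inl t') \<in> (snd H)\<^sup>*" using t'(2) e2 by (meson converse_rtrancl_into_rtrancl)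
      ultimately show ?thesis using notshadow[OF wH _ _ ws] t t' by blast
    qed
  qed
qed

end
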